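(* Let $G$ be a simple graph with at least one edge and clique number $\omega$. Then $G$ has at least $\dfrac{\binom{\omega}{3}}{1+3(\omega-3)}$ $\mathcal{H}$-eigenvalues (counted with multiplicity) not less than $3$.
   Context: For an oriented edge $e$ write $e^-$ for its tail and $e^+$ for its head. For distinct edges $e,e'$: $e\leftrightarrow e'$ means $e^+=e'^-$ or $e'^+=e^-$; $e\overset{\pm}{\sim}e'$ means $e^+=e'^+$ or $e^-=e'^-$; $e\vartriangle e'$ means $e,e'$ are two edges of a common triangle. $\triangle(e)$ is the number of triangles containing $e$. The Helmholtzian matrix $\mathcal{H}(G)=(h_{ee'})$ is indexed by edges, with $h_{ee}=\triangle(e)+2$, and for $e\ne e'$: $h_{ee'}=-1$ if $e\leftrightarrow e'$ and not $e\vartriangle e'$; $h_{ee'}=1$ if $e\overset{\pm}{\sim}e'$ and not $e\vartriangle e'$; $h_{ee'}=0$ otherwise. The $\mathcal{H}$-eigenvalues of $G$ are the eigenvalues of $\mathcal{H}(G)$ for an arbitrary edge orientation (independent of the orientation). *)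

theory Defs
  imports "Jordan_Normal_Form.Char_Poly"
begin

text \<open>A simple graph on a finite vertex set V is given together with an orientation:
  D is the set of oriented edges (arcs). Each undirected edge {u,v} appears
  exactly once, as (u,v) or (v,u).\<close>

definition oriented_simple_graph :: "'a set \<Rightarrow> ('a \<times> 'a) set \<Rightarrow> bool" where
  "oriented_simple_graph V D \<longleftrightarrow> finite V \<and> D \<subseteq> V \<times> V \<and>
     (\<forall>u v. (u, v) \<in> D \<longrightarrow> u \<noteq> v \<and> (v, u) \<notin> D)"

definition adj :: "('a \<times> 'a) set \<Rightarrow> 'a \<Rightarrow> 'a \<Rightarrow> bool" where
  "adj D u v \<longleftrightarrow> (u, v) \<in> D \<or> (v, u) \<in> D"

definition is_clique :: "'a set \<Rightarrow> ('a \<times> 'a) set \<Rightarrow> 'a set \<Rightarrow> bool" where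
  "is_clique V D C \<longleftrightarrow> C \<subseteq> V \<and> (\<forall>u\<in>C. \<forall>v\<in>C. u \<noteq> v \<longrightarrow> adj D u v)"

definition clique_number :: "'a set \<Rightarrow> ('a \<times> 'a) set \<Rightarrow> nat" where
  "clique_number V D = Max (card ` {C. is_clique V D C})"

definition is_triangle :: "'a set \<Rightarrow> ('a \<times> 'a) set \<Rightarrow> 'a set \<Rightarrow> bool" where
  "is_triangle V D T \<longleftrightarrow> card T = 3 \<and> is_clique V D T"

definition ends :: "'a \<times> 'a \<Rightarrow> 'a set" where
  "ends e = {fst e, snd e}"

definition num_tri :: "'a set \<Rightarrow> ('a \<times> 'a) set \<Rightarrow> 'a \<times> 'a \<Rightarrow> nat" where
  "num_tri V D e = card {T. is_triangle V D T \<and> ends e \<subseteq> T}"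

definition in_common_tri :: "'a set \<Rightarrow> ('a \<times> 'a) set \<Rightarrow> 'a \<times> 'a \<Rightarrow> 'a \<times> 'a \<Rightarrow> bool" where
  "in_common_tri V D e e' \<longleftrightarrow> e \<noteq> e' \<and>
     (\<exists>T. is_triangle V D T \<and> ends e \<subseteq> T \<and> ends e' \<subseteq> T)"

definition head_tail :: "'a \<times> 'a \<Rightarrow> 'a \<times> 'a \<Rightarrow> bool" where
  "head_tail e e' \<longleftrightarrow> snd e = fst e' \<or> snd e' = fst e"

definition same_end :: "'a \<times> 'a \<Rightarrow> 'a \<times> 'a \<Rightarrow> bool" where
  "same_end e e' \<longleftrightarrow> snd e = snd e' \<or> fst e = fst e'"

definition helm_entry :: "'a set \<Rightarrow> ('a \<times> 'a) set \<Rightarrow> 'a \<times> 'a \<Rightarrow> 'a \<times> 'a \<Rightarrow> real" where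
  "helm_entry V D e e' =
     (if e = e' then real (num_tri V D e) + 2
      else if head_tail e e' \<and> \<not> in_common_tri V D e e' then -1
      else if same_end e e' \<and> \<not> in_common_tri V D e e' then 1
      else 0)"

definition helmholtzian :: "'a set \<Rightarrow> ('a \<times> 'a) set \<Rightarrow> ('a \<times> 'a) list \<Rightarrow> real mat" where
  "helmholtzian V D es = mat (length es) (length es) (\<lambda>(i, j). helm_entry V D (es ! i) (es ! j))"

definition num_eigs_ge :: "real mat \<Rightarrow> real \<Rightarrow> nat" where
  "num_eigs_ge A c = (\<Sum>x\<in>{x. poly (char_poly A) x = 0 \<and> x \<ge> c}. order x (char_poly A))"

end

theory Submission
  imports Defs "Jordan_Normal_Form.Schur_Decomposition"
begin
lemma herm_real_eig:
  fixes A :: "real mat" and a :: complex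
  assumes A: "A \<in> carrier_mat n n" and sym: "\<And>i j. i < n \<Longrightarrow> j < n \<Longrightarrow> A $$ (i,j) = A $$ (j,i)"
  and ev: "eigenvalue (map_mat complex_of_real A) a"
  shows "Im a = 0"
proof -
  let ?Ac = "map_mat complex_of_real A"
  from ev obtain v where v: "v \<in> carrier_vec n" "v \<noteq> 0\<^sub>v n" and Av: "?Ac *\<^sub>v v = a \<cdot>\<^sub>v v"
    unfolding eigenvalue_def eigenvector_def using A by auto
  have comp: "(\<Sum>j<n. complex_of_real (A $$ (i,j)) * v $ j) = a * v $ i" if "i < n" for i
  proof -
    have "(?Ac *\<^sub>v v) $ i = (a \<cdot>\<^sub>v v) $ i" using Av by simp
    thus ?thesis using that A v by (simp add: mult_mat_vec_def scalar_prod_def lessThan_atLeast0)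
  qed
  define S where "S = (\<Sum>i<n. \<Sum>j<n. cnj (v $ i) * complex_of_real (A $$ (i,j)) * v $ j)"
  define N where "N = (\<Sum>i<n. cnj (v $ i) * v $ i)"
  have SN: "S = a * N"
  proof -
    have "S = (\<Sum>i<n. cnj (v $ i) * (\<Sum>j<n. complex_of_real (A $$ (i,j)) * v $ j))"
      unfolding S_def by (simp add: sum_distrib_left mult.assoc)
    also have "\<dots> = (\<Sum>i<n. cnj (v $ i) * (a * v $ i))" using comp by simp
    also have "\<dots> = a * N" unfolding N_def by (simp add: sum_distrib_left algebra_simps)
    finally show ?thesis .
  qed
  have "cnj S = (\<Sum>i<n. \<Sum>j<n. v $ i * complex_of_real (A $$ (i,j)) * cnj (v $ j))"
    unfolding S_def by (simp add: cnj_sum)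
  also have "\<dots> = (\<Sum>j<n. \<Sum>i<n. v $ i * complex_of_real (A $$ (i,j)) * cnj (v $ j))"
    by (rule sum.swap)
  also have "\<dots> = S" unfolding S_def
    by (rule sum.cong[OF refl], rule sum.cong[OF refl], simp add: sym algebra_simps)
  finally have "cnj S = S" .
  hence ImS: "Im S = 0" by (metis cnj.sel(2) neg_equal_zero)
  have Nterm: "cnj (v $ i) * v $ i = complex_of_real ((cmod (v $ i))\<^sup>2)" for i
    by (metis complex_norm_square mult.commute of_real_power)
  have ImN: "Im N = 0" unfolding N_def Nterm by (simp add: Im_sum)
  obtain i where i: "i < n" "v $ i \<noteq> 0" using v by (metis dim_vec carrier_vecD eq_vecI index_zero_vec(1) index_zero_vec(2))
  have "Re N = (\<Sum>i<n. (cmod (v $ i))\<^sup>2)" unfolding N_def Nterm by (simp add: Re_sum)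
  also have "\<dots> \<ge> (cmod (v $ i))\<^sup>2" using i by (intro member_le_sum) auto
  finally have "Re N > 0" using i by (smt (verit) zero_less_norm_iff zero_less_power)
  moreover have "Im S = Im a * Re N + Re a * Im N" using SN by simp
  ultimately show ?thesis using ImS ImN by simp
qed

lemma sym_char_poly_split:
  fixes A :: "real mat"
  assumes A: "A \<in> carrier_mat n n" and sym: "\<And>i j. i < n \<Longrightarrow> j < n \<Longrightarrow> A $$ (i,j) = A $$ (j,i)"
  shows "\<exists>es. char_poly A = (\<Prod>a\<leftarrow>es. [:- a, 1:]) \<and> length es = n"
proof -
  let ?Ac = "map_mat complex_of_real A"
  have Ac: "?Ac \<in> carrier_mat n n" using A by simp
  from char_poly_factorized[OF Ac] obtain as where
    cp: "char_poly ?Ac = (\<Prod>a\<leftarrow>as. [:- a, 1:])" and len: "length as = n" by blast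
  have re: "a = complex_of_real (Re a)" if "a \<in> set as" for a
  proof -
    have "poly (char_poly ?Ac) a = 0" unfolding cp using that
      by (simp add: poly_prod_list prod_list_zero_iff)
    hence "eigenvalue ?Ac a" using eigenvalue_root_char_poly[OF Ac] by simp
    from herm_real_eig[OF A sym this] show ?thesis by (simp add: complex_eq_iff)
  qed
  have as_eq: "as = map (complex_of_real \<circ> Re) as" using re by (induct as) auto
  have "(\<Prod>a\<leftarrow>as. [:- a, 1:]) = map_poly complex_of_real (\<Prod>a\<leftarrow>map Re as. [:- a, 1:])"
  proof -
    have gen: "map_poly complex_of_real (\<Prod>a\<leftarrow>rs. [:- a, 1:]) = (\<Prod>a\<leftarrow>rs. [:- complex_of_real a, 1:])" for rs
    proof (induct rs)
      case (Cons r rs)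
      interpret rp: map_poly_comm_ring_hom "complex_of_real" ..
      show ?case using Cons by (simp only: list.map prod_list.Cons rp.hom_mult) simp
    qed simp
    show ?thesis by (subst as_eq, subst gen, simp add: o_def)
  qed
  moreover have "char_poly ?Ac = map_poly complex_of_real (char_poly A)"
    by (rule of_real_hom.char_poly_hom[OF A])
  ultimately have "map_poly complex_of_real (char_poly A) = map_poly complex_of_real (\<Prod>a\<leftarrow>map Re as. [:- a, 1:])"
    using cp by simp
  hence "char_poly A = (\<Prod>a\<leftarrow>map Re as. [:- a, 1:])" 
  proof (intro poly_eqI)
    fix i assume eq: "map_poly complex_of_real (char_poly A) = map_poly complex_of_real (\<Prod>a\<leftarrow>map Re as. [:- a, 1:])"
    have "complex_of_real (coeff (char_poly A) i) = complex_of_real (coeff (\<Prod>a\<leftarrow>map Re as. [:- a, 1:]) i)"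
      using arg_cong[OF eq, of "\<lambda>p. coeff p i"] by (simp add: coeff_map_poly)
    thus "coeff (char_poly A) i = coeff (\<Prod>a\<leftarrow>map Re as. [:- a, 1:]) i" by simp
  qed
  thus ?thesis using len by (intro exI[of _ "map Re as"]) auto
qed

definition tr :: "real mat \<Rightarrow> real" where "tr M = (\<Sum>i<dim_row M. M $$ (i,i))"

lemma tr_mult_comm: assumes "A \<in> carrier_mat n m" "B \<in> carrier_mat m n"
  shows "tr (A * B) = tr (B * A)"
proof -
  have "tr (A * B) = (\<Sum>i<n. \<Sum>k<m. A $$ (i,k) * B $$ (k,i))"
    unfolding tr_def using assms by (simp add: scalar_prod_def lessThan_atLeast0)
  also have "\<dots> = (\<Sum>k<m. \<Sum>i<n. B $$ (k,i) * A $$ (i,k))"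
    by (subst sum.swap) (simp add: mult.commute)
  also have "\<dots> = tr (B * A)"
    unfolding tr_def using assms by (simp add: scalar_prod_def lessThan_atLeast0)
  finally show ?thesis .
qed

lemma tr_similar: assumes "similar_mat_wit A T P Q" "A \<in> carrier_mat n n"
  shows "tr A = tr T"
proof -
  from similar_mat_witD2[OF assms(2) assms(1)] have
    T: "T \<in> carrier_mat n n" and P: "P \<in> carrier_mat n n" and Q: "Q \<in> carrier_mat n n"
    and PQ: "P * Q = 1\<^sub>m n" and QP: "Q * P = 1\<^sub>m n" and AA: "A = P * T * Q" by auto
  have "tr A = tr (P * (T * Q))" using AA P T Q by simp
  also have "\<dots> = tr ((T * Q) * P)" by (rule tr_mult_comm[OF P], use T Q in auto)
  also have "(T * Q) * P = T" using T Q P QP by simp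
  finally show ?thesis .
qed

lemma tr_diag: "tr T = sum_list (diag_mat T)"
  unfolding tr_def diag_mat_def by (simp add: sum_list_sum_nth lessThan_atLeast0)

lemma sym_eig_ne:
  fixes A :: "real mat"
  assumes A: "A \<in> carrier_mat n n" and sym: "\<And>i j. i < n \<Longrightarrow> j < n \<Longrightarrow> A $$ (i,j) = A $$ (j,i)"
  and ne: "tr A \<noteq> real n * s"
  shows "\<exists>\<mu>. \<mu> \<noteq> s \<and> eigenvalue A \<mu>"
proof -
  obtain es where cp: "char_poly A = (\<Prod>a\<leftarrow>es. [:- a, 1:])" and len: "length es = n"
    using sym_char_poly_split[OF A sym] by blast
  obtain T P Q where sd: "schur_decomposition A es = (T,P,Q)" by (cases "schur_decomposition A es") auto
  from schur_decomposition[OF A cp sd] have sim: "similar_mat_wit A T P Q" and dg: "diag_mat T = es" by auto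
  have "tr A = sum_list es" using tr_similar[OF sim A] tr_diag dg by simp
  show ?thesis
  proof (rule ccontr)
    assume "\<not> ?thesis"
    hence all: "\<forall>\<mu>\<in>set es. \<mu> = s"
      using eigenvalue_root_char_poly[OF A] unfolding cp
      by (auto simp: poly_prod_list prod_list_zero_iff)
    hence "es = replicate n s" using len by (metis replicate_length_same) 
    hence "sum_list es = real n * s" by (simp add: sum_list_replicate)
    thus False using ne \<open>tr A = sum_list es\<close> by simp
  qed
qed

lemma mv_comp: assumes "A \<in> carrier_mat n m" "v \<in> carrier_vec m" "a < n"
  shows "(A *\<^sub>v v) $ a = (\<Sum>b<m. A $$ (a,b) * v $ b)"
  using assms by (simp add: scalar_prod_def lessThan_atLeast0)

lemma sp_comp: assumes "w \<in> carrier_vec n"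
  shows "v \<bullet> w = (\<Sum>b<n. v $ b * w $ b)"
  using assms by (simp add: scalar_prod_def lessThan_atLeast0)

lemma sym_scalar:
  fixes A :: "real mat"
  assumes A: "A \<in> carrier_mat n n" and sym: "\<And>i j. i < n \<Longrightarrow> j < n \<Longrightarrow> A $$ (i,j) = A $$ (j,i)"
  and x: "x \<in> carrier_vec n" and y: "y \<in> carrier_vec n"
  shows "x \<bullet> (A *\<^sub>v y) = (A *\<^sub>v x) \<bullet> y"
proof -
  have "transpose_mat A = A" using A sym by (intro eq_matI) auto
  with transpose_vec_mult_scalar[OF A y x] show ?thesis by simp
qed

lemma pos_sq: fixes w :: "real vec" assumes w: "w \<in> carrier_vec n" "w \<noteq> 0\<^sub>v n"
  shows "w \<bullet> w > 0"
proof -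
  obtain a where a: "a < n" "w $ a \<noteq> 0" using w by (metis carrier_vecD eq_vecI index_zero_vec(1) index_zero_vec(2))
  have "w \<bullet> w = (\<Sum>b<n. w $ b * w $ b)" using sp_comp[OF w(1)] by simp
  also have "\<dots> \<ge> w $ a * w $ a" using a by (intro member_le_sum) auto
  finally show ?thesis using a by (smt (verit) not_real_square_gt_zero)
qed

lemma eig_step:
  fixes A :: "real mat"
  assumes A: "A \<in> carrier_mat n n" and sym: "\<And>i j. i < n \<Longrightarrow> j < n \<Longrightarrow> A $$ (i,j) = A $$ (j,i)"
  and jn: "j < n" and lus: "length us = j" and lds: "length ds = j"
  and usc: "\<And>i. i < j \<Longrightarrow> us ! i \<in> carrier_vec n"
  and orth: "\<And>i l. i < j \<Longrightarrow> l < j \<Longrightarrow> us ! i \<bullet> us ! l = (if i = l then 1 else 0)"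
  and eig: "\<And>i. i < j \<Longrightarrow> A *\<^sub>v us ! i = ds ! i \<cdot>\<^sub>v us ! i"
  shows "\<exists>w \<mu>. w \<in> carrier_vec n \<and> w \<bullet> w = 1 \<and> (\<forall>i<j. us ! i \<bullet> w = 0) \<and> A *\<^sub>v w = \<mu> \<cdot>\<^sub>v w"
proof -
  define s where "s = (tr A - sum_list ds) / (real n - real j) + 1"
  define B where "B = mat n n (\<lambda>(a,b). A $$ (a,b) - (\<Sum>i<j. (ds!i - s) * (us!i) $ a * (us!i) $ b))"
  have B: "B \<in> carrier_mat n n" unfolding B_def by simp
  have Bsym: "B $$ (a,b) = B $$ (b,a)" if "a < n" "b < n" for a b
    using that sym unfolding B_def by (simp add: ac_simps)
  have Bv: "(B *\<^sub>v v) $ a = (A *\<^sub>v v) $ a - (\<Sum>i<j. (ds!i - s) * (us!i) $ a * (us!i \<bullet> v))"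
    if v: "v \<in> carrier_vec n" and a: "a < n" for v a
  proof -
    have "(B *\<^sub>v v) $ a = (\<Sum>b<n. (A $$ (a,b) - (\<Sum>i<j. (ds!i - s) * (us!i) $ a * (us!i) $ b)) * v $ b)"
      using mv_comp[OF B v a] a unfolding B_def by simp
    also have "\<dots> = (\<Sum>b<n. A $$ (a,b) * v $ b) - (\<Sum>b<n. \<Sum>i<j. (ds!i - s) * (us!i) $ a * ((us!i) $ b * v $ b))"
      by (simp add: left_diff_distrib sum_subtractf sum_distrib_right mult.assoc)
    also have "(\<Sum>b<n. \<Sum>i<j. (ds!i - s) * (us!i) $ a * ((us!i) $ b * v $ b)) =
       (\<Sum>i<j. (ds!i - s) * (us!i) $ a * (us!i \<bullet> v))"
      by (subst sum.swap) (simp add: sp_comp[OF v] sum_distrib_left)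
    finally show ?thesis using mv_comp[OF A v a] by simp
  qed
  have trB: "tr B = tr A - (sum_list ds - real j * s)"
  proof -
    have "tr B = (\<Sum>a<n. A $$ (a,a) - (\<Sum>i<j. (ds!i - s) * ((us!i) $ a * (us!i) $ a)))"
      unfolding tr_def using B by (simp add: B_def mult.assoc)
    also have "\<dots> = (\<Sum>a<n. A $$ (a,a)) - (\<Sum>a<n. \<Sum>i<j. (ds!i - s) * ((us!i) $ a * (us!i) $ a))"
      by (simp add: sum_subtractf)
    also have "(\<Sum>a<n. \<Sum>i<j. (ds!i - s) * ((us!i) $ a * (us!i) $ a)) = (\<Sum>i<j. \<Sum>a<n. (ds!i - s) * ((us!i) $ a * (us!i) $ a))"
      by (rule sum.swap)
    also have "\<dots> = (\<Sum>i<j. (ds!i - s) * (us!i \<bullet> us!i))"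
      by (rule sum.cong[OF refl]) (simp add: sp_comp[OF usc] sum_distrib_left)
    also have "(\<Sum>a<n. A $$ (a,a)) = tr A" unfolding tr_def using A by simp
    also have "(\<Sum>i<j. (ds!i - s) * (us!i \<bullet> us!i)) = (\<Sum>i<j. ds!i) - real j * s"
      using orth by (simp add: sum_subtractf)
    also have "(\<Sum>i<j. ds!i) = sum_list ds" using lds by (simp add: sum_list_sum_nth lessThan_atLeast0)
    finally show ?thesis .
  qed
  have "tr B \<noteq> real n * s"
  proof
    assume "tr B = real n * s"
    hence "(real n - real j) * s = tr A - sum_list ds" using trB by (simp add: algebra_simps)
    moreover have "(real n - real j) * s = tr A - sum_list ds + (real n - real j)"
      using jn unfolding s_def by (simp add: field_simps)
    ultimately show False using jn by simp
  qed
  from sym_eig_ne[OF B Bsym this] obtain \<mu> where mus: "\<mu> \<noteq> s" and ev: "eigenvalue B \<mu>" by blast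
  from ev obtain w where w: "w \<in> carrier_vec n" "w \<noteq> 0\<^sub>v n" and Bw: "B *\<^sub>v w = \<mu> \<cdot>\<^sub>v w"
    unfolding eigenvalue_def eigenvector_def using B by auto
  have Bu: "B *\<^sub>v us!l = s \<cdot>\<^sub>v us!l" if l: "l < j" for l
  proof (rule eq_vecI)
    fix a assume "a < dim_vec (s \<cdot>\<^sub>v us!l)"
    hence a: "a < n" using usc[OF l] by simp
    have "(B *\<^sub>v us!l) $ a = ds!l * (us!l) $ a - (\<Sum>i<j. (ds!i - s) * (us!i) $ a * (if i = l then 1 else 0))"
      using Bv[OF usc[OF l] a] eig[OF l] orth[OF _ l] a usc[OF l] by simp
    also have "\<dots> = s * (us!l) $ a" using l by (simp add: if_distrib[of "\<lambda>x. _ * x"] cong: if_cong) (simp add: algebra_simps)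
    finally show "(B *\<^sub>v us!l) $ a = (s \<cdot>\<^sub>v us!l) $ a" using a usc[OF l] by simp
  qed (use B usc[OF l] in auto)
  have uw: "us!l \<bullet> w = 0" if l: "l < j" for l
  proof -
    have "\<mu> * (us!l \<bullet> w) = us!l \<bullet> (B *\<^sub>v w)" using Bw w usc[OF l] by simp
    also have "\<dots> = (B *\<^sub>v us!l) \<bullet> w" by (rule sym_scalar[OF B Bsym usc[OF l] w(1)])
    also have "\<dots> = s * (us!l \<bullet> w)" using Bu[OF l] w usc[OF l] by simp
    finally show ?thesis using mus by simp
  qed
  have Aw: "A *\<^sub>v w = \<mu> \<cdot>\<^sub>v w"
  proof (rule eq_vecI)
    fix a assume "a < dim_vec (\<mu> \<cdot>\<^sub>v w)"
    hence a: "a < n" using w by simp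
    have "(A *\<^sub>v w) $ a = (B *\<^sub>v w) $ a" using Bv[OF w(1) a] uw by simp
    thus "(A *\<^sub>v w) $ a = (\<mu> \<cdot>\<^sub>v w) $ a" using Bw by simp
  qed (use A w in auto)
  have wpos: "w \<bullet> w > 0" by (rule pos_sq[OF w])
  define c where "c = 1 / sqrt (w \<bullet> w)"
  define w' where "w' = c \<cdot>\<^sub>v w"
  have "w' \<in> carrier_vec n" using w unfolding w'_def by simp
  moreover have "w' \<bullet> w' = 1" unfolding w'_def c_def using w wpos
    by (simp add: field_simps)
  moreover have "\<forall>i<j. us ! i \<bullet> w' = 0" unfolding w'_def using uw usc w by simp
  moreover have "A *\<^sub>v w' = \<mu> \<cdot>\<^sub>v w'" unfolding w'_def using Aw A w
    by (simp add: mult_mat_vec smult_smult_assoc mult.commute)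
  ultimately show ?thesis by blast
qed

lemma eig_basis:
  fixes A :: "real mat"
  assumes A: "A \<in> carrier_mat n n" and sym: "\<And>i j. i < n \<Longrightarrow> j < n \<Longrightarrow> A $$ (i,j) = A $$ (j,i)"
  shows "j \<le> n \<Longrightarrow> \<exists>us ds. length us = j \<and> length ds = j \<and> (\<forall>i<j. us ! i \<in> carrier_vec n) \<and>
    (\<forall>i<j. \<forall>l<j. us ! i \<bullet> us ! l = (if i = l then 1 else 0)) \<and> (\<forall>i<j. A *\<^sub>v us ! i = ds ! i \<cdot>\<^sub>v us ! i)"
proof (induct j)
  case 0
  show ?case by (intro exI[of _ "[]"]) auto
next
  case (Suc j)
  then obtain us ds where lus: "length us = j" and lds: "length ds = j" and usc: "\<forall>i<j. us ! i \<in> carrier_vec n"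
    and orth: "\<forall>i<j. \<forall>l<j. us ! i \<bullet> us ! l = (if i = l then 1 else 0)"
    and eig: "\<forall>i<j. A *\<^sub>v us ! i = ds ! i \<cdot>\<^sub>v us ! i" by auto
  from eig_step[OF A sym _ lus lds] Suc(2) usc orth eig obtain w \<mu> where
    w: "w \<in> carrier_vec n" "w \<bullet> w = 1" "\<forall>i<j. us ! i \<bullet> w = 0" "A *\<^sub>v w = \<mu> \<cdot>\<^sub>v w" by fastforce
  have wu: "w \<bullet> us ! i = 0" if "i < j" for i using w usc that comm_scalar_prod[OF w(1), of "us ! i"] by auto
  show ?case
    apply (intro exI[of _ "us @ [w]"] exI[of _ "ds @ [\<mu>]"])
    using lus lds usc orth eig w wu by (auto simp: nth_append less_Suc_eq)
qed

lemma order_lin_prod: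
  fixes ds :: "real list"
  shows "Polynomial.order x (\<Prod>a\<leftarrow>ds. [:- a, 1:]) = count_list ds x"
proof (induct ds)
  case Nil
  then show ?case using order_0I[of 1 x] by simp
next
  case (Cons a ds)
  have nz: "[:- a, 1:] * (\<Prod>a\<leftarrow>ds. [:- a, 1:]) \<noteq> (0 :: real poly)"
    by (simp add: prod_list_zero_iff image_iff del: mult_pCons_left)
  have o1: "Polynomial.order x [:- a, 1:] = (if a = x then 1 else 0)"
  proof (cases "a = x")
    case True then show ?thesis using order_power_n_n[of x 1] by simp
  next
    case False
    hence "poly [:- a, 1:] x \<noteq> 0" by simp
    then show ?thesis using False by (simp add: order_0I)
  qed
  show ?case using order_mult[OF nz, of x] o1 Cons by simp
qed

lemma count_roots:
  fixes ds :: "real list"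
  shows "(\<Sum>x\<in>{x. poly (\<Prod>a\<leftarrow>ds. [:- a, 1:]) x = 0 \<and> x \<ge> t}. Polynomial.order x (\<Prod>a\<leftarrow>ds. [:- a, 1:]))
     = card {i. i < length ds \<and> ds ! i \<ge> t}"
proof -
  have R: "{x. poly (\<Prod>a\<leftarrow>ds. [:- a, 1:]) x = 0 \<and> x \<ge> t} = set (filter (\<lambda>a. a \<ge> t) ds)"
    by (auto simp: poly_prod_list prod_list_zero_iff)
  have cf: "count_list (filter P xs) x = (if P x then count_list xs x else 0)" for P x and xs :: "real list"
    by (induct xs) auto
  have "(\<Sum>x\<in>set (filter (\<lambda>a. a \<ge> t) ds). count_list ds x) = (\<Sum>x\<in>set (filter (\<lambda>a. a \<ge> t) ds). count_list (filter (\<lambda>a. a \<ge> t) ds) x)"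
    by (rule sum.cong[OF refl]) (auto simp: cf)
  also have "\<dots> = length (filter (\<lambda>a. a \<ge> t) ds)" by (rule sum_count_set) auto
  also have "\<dots> = card {i. i < length ds \<and> ds ! i \<ge> t}" by (rule length_filter_conv_card)
  finally show ?thesis unfolding R order_lin_prod .
qed

lemma count_eigs:
  fixes A :: "real mat" and Bm :: "real mat"
  assumes A: "A \<in> carrier_mat n n" and sym: "\<And>i j. i < n \<Longrightarrow> j < n \<Longrightarrow> A $$ (i,j) = A $$ (j,i)"
  and Bm: "Bm \<in> carrier_mat n k"
  and pos: "\<And>c. c \<in> carrier_vec k \<Longrightarrow> c \<noteq> 0\<^sub>v k \<Longrightarrow>
     Bm *\<^sub>v c \<noteq> 0\<^sub>v n \<and> t * ((Bm *\<^sub>v c) \<bullet> (Bm *\<^sub>v c)) \<le> (Bm *\<^sub>v c) \<bullet> (A *\<^sub>v (Bm *\<^sub>v c))"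
  shows "k \<le> num_eigs_ge A t"
proof -
  obtain us ds where lus: "length us = n" and lds: "length ds = n" and usc: "\<forall>i<n. us ! i \<in> carrier_vec n"
    and orth: "\<forall>i<n. \<forall>l<n. us ! i \<bullet> us ! l = (if i = l then 1 else 0)"
    and eig: "\<forall>i<n. A *\<^sub>v us ! i = ds ! i \<cdot>\<^sub>v us ! i"
    using eig_basis[OF A sym, of n] by auto
  define U where "U = mat_of_cols n us"
  have U: "U \<in> carrier_mat n n" unfolding U_def using lus by auto
  have Ut: "transpose_mat U \<in> carrier_mat n n" using U by simp
  have Uent: "U $$ (a,i) = us ! i $ a" if "a < n" "i < n" for a i
    unfolding U_def mat_of_cols_def using that lus by simp
  have colU: "col U i = us ! i" if "i < n" for i unfolding U_def using that lus usc by simp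
  have UtU: "transpose_mat U * U = 1\<^sub>m n"
    by (rule eq_matI) (use U colU orth in auto)
  have UUt: "U * transpose_mat U = 1\<^sub>m n" by (rule mat_mult_left_right_inverse[OF Ut U UtU])
  define D where "D = mat n n (\<lambda>(i,l). if i = l then ds ! i else (0::real))"
  have D: "D \<in> carrier_mat n n" unfolding D_def by simp
  have AU: "A * U = U * D"
  proof (rule eq_matI)
    fix a l assume a: "a < dim_row (U * D)" and l: "l < dim_col (U * D)"
    hence a: "a < n" and l: "l < n" using U D by auto
    have "(A * U) $$ (a,l) = (A *\<^sub>v us ! l) $ a" using A U a l colU[OF l] by simp
    also have "\<dots> = ds ! l * us ! l $ a" using eig l a usc[rule_format, OF l] by simp
    also have "\<dots> = (\<Sum>i<n. U $$ (a,i) * D $$ (i,l))"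
      using l a by (simp add: D_def Uent if_distrib[of "\<lambda>x. _ * x"] cong: if_cong)
    also have "\<dots> = (U * D) $$ (a,l)" using U D a l by (simp add: scalar_prod_def lessThan_atLeast0)
    finally show "(A * U) $$ (a,l) = (U * D) $$ (a,l)" .
  qed (use A U D in auto)
  have AUDU: "A = U * D * transpose_mat U"
  proof -
    have "A = A * (U * transpose_mat U)" using A UUt by simp
    also have "\<dots> = (A * U) * transpose_mat U" using A U Ut by simp
    finally show ?thesis unfolding AU .
  qed
  have sim: "similar_mat A D"
    unfolding similar_mat_def similar_mat_wit_def
    by (rule exI[of _ U], rule exI[of _ "transpose_mat U"]) (use A U D UUt UtU AUDU in auto)
  have ut: "upper_triangular D" unfolding upper_triangular_def D_def by auto
  have dD: "diag_mat D = ds" unfolding diag_mat_def D_def using lds by (simp add: list_eq_iff_nth_eq)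
  have cp: "char_poly A = (\<Prod>a\<leftarrow>ds. [:- a, 1:])"
    using char_poly_similar[OF sim] char_poly_upper_triangular[OF D ut] dD by simp
  define I where "I = {i. i < n \<and> ds ! i \<ge> t}"
  have nI: "num_eigs_ge A t = card I"
    unfolding num_eigs_ge_def cp I_def using count_roots[of ds t] lds by simp
  show ?thesis
  proof (rule ccontr)
    assume "\<not> ?thesis"
    hence cI: "card I < k" using nI by simp
    define Is where "Is = sorted_list_of_set I"
    have lIs: "length Is = card I" unfolding Is_def by simp
    have IsI: "Is ! r \<in> I" if "r < card I" for r
      using that unfolding Is_def by (metis I_def finite_Collect_conjI finite_Collect_less_nat nth_mem set_sorted_list_of_set lIs Is_def)
    have Icov: "\<exists>r < card I. Is ! r = i" if "i \<in> I" for i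
      using that unfolding Is_def by (metis I_def finite_Collect_conjI finite_Collect_less_nat in_set_conv_nth set_sorted_list_of_set lIs Is_def)
    define R where "R = (\<lambda>r. vec k (\<lambda>j. \<Sum>a<n. us ! (Is ! r) $ a * Bm $$ (a,j)))"
    define M where "M = mat\<^sub>r k k (\<lambda>r. if r = k - 1 then 0\<^sub>v k else if r < card I then R r else 0\<^sub>v k)"
    have "det M = 0" unfolding M_def by (rule det_row_0) (use cI R_def in auto)
    moreover have M: "M \<in> carrier_mat k k" unfolding M_def by simp
    ultimately obtain c where c: "c \<in> carrier_vec k" "c \<noteq> 0\<^sub>v k" and Mc: "M *\<^sub>v c = 0\<^sub>v k"
      using det_0_iff_vec_prod_zero[OF M] by auto
    define x where "x = Bm *\<^sub>v c"
    have x: "x \<in> carrier_vec n" unfolding x_def using Bm c by simp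
    have px: "x \<noteq> 0\<^sub>v n" "t * (x \<bullet> x) \<le> x \<bullet> (A *\<^sub>v x)" using pos[OF c] unfolding x_def by auto
    define y where "y = transpose_mat U *\<^sub>v x"
    have y: "y \<in> carrier_vec n" unfolding y_def using Ut x by simp
    have yi: "y $ i = us ! i \<bullet> x" if "i < n" for i
      unfolding y_def using that Ut x U colU[OF that] by simp
    have yI: "y $ i = 0" if iI: "i \<in> I" for i
    proof -
      obtain r where r: "r < card I" "Is ! r = i" using Icov[OF iI] by blast
      have i: "i < n" using iI I_def by simp
      have rk: "r < k - 1" "r < k" using r cI by auto
      have "0 = (M *\<^sub>v c) $ r" using Mc rk by simp
      also have "\<dots> = (\<Sum>j<k. (\<Sum>a<n. us ! i $ a * Bm $$ (a,j)) * c $ j)"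
        using rk r c unfolding M_def R_def by (simp add: scalar_prod_def lessThan_atLeast0)
      also have "\<dots> = (\<Sum>a<n. us ! i $ a * (\<Sum>j<k. Bm $$ (a,j) * c $ j))"
        by (simp add: sum_distrib_left sum_distrib_right mult.assoc) (rule sum.swap)
      also have "\<dots> = us ! i \<bullet> x"
        unfolding x_def using Bm c by (simp add: sp_comp[of _ n] scalar_prod_def lessThan_atLeast0)
      finally show ?thesis using yi[OF i] by simp
    qed
    have xUy: "x = U *\<^sub>v y" unfolding y_def using U Ut x UUt by (simp flip: assoc_mult_mat_vec)
    have y0: "y \<noteq> 0\<^sub>v n" using px(1) xUy U by auto
    have xx: "x \<bullet> x = y \<bullet> y"
      using transpose_vec_mult_scalar[OF U y x] xUy unfolding y_def by simp
    have xAx: "x \<bullet> (A *\<^sub>v x) = y \<bullet> (D *\<^sub>v y)"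
    proof -
      have "A *\<^sub>v x = U *\<^sub>v (D *\<^sub>v y)" using xUy A U D y AU
        by (metis assoc_mult_mat_vec)
      thus ?thesis using transpose_vec_mult_scalar[OF U _ x, of "D *\<^sub>v y"] D y unfolding y_def by simp
    qed
    have Dy: "D *\<^sub>v y = vec n (\<lambda>i. ds ! i * y $ i)"
    proof (rule eq_vecI)
      fix i assume "i < dim_vec (vec n (\<lambda>i. ds ! i * y $ i))"
      hence i: "i < n" by simp
      have "(D *\<^sub>v y) $ i = (\<Sum>b<n. (if i = b then ds ! i else 0) * y $ b)"
        using mv_comp[OF D y i] i by (simp add: D_def)
      also have "\<dots> = ds ! i * y $ i" using i by (simp add: if_distrib[of "\<lambda>x. x * _"] cong: if_cong)
      finally show "(D *\<^sub>v y) $ i = vec n (\<lambda>i. ds ! i * y $ i) $ i" using i by simp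
    qed (use D in auto)
    have "y \<bullet> (D *\<^sub>v y) = (\<Sum>i<n. ds ! i * (y $ i * y $ i))"
      unfolding Dy by (simp add: sp_comp[of _ n] ac_simps)
    moreover have "y \<bullet> y = (\<Sum>i<n. y $ i * y $ i)" by (rule sp_comp[OF y])
    moreover have "(\<Sum>i<n. ds ! i * (y $ i * y $ i)) < t * (\<Sum>i<n. y $ i * y $ i)"
    proof -
      obtain a where a: "a < n" "y $ a \<noteq> 0" using y y0 by (metis carrier_vecD eq_vecI index_zero_vec(1) index_zero_vec(2))
      have aI: "a \<notin> I" using yI a by auto
      have "0 < (\<Sum>i<n. (t - ds ! i) * (y $ i * y $ i))"
      proof (rule sum_pos2[of "{..<n}" a])
        have "t - ds ! a > 0" using a aI I_def by auto
        moreover have "y $ a * y $ a > 0" using a(2) by (metis not_real_square_gt_zero)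
        ultimately show "0 < (t - ds ! a) * (y $ a * y $ a)" by simp
        show "\<And>i. i \<in> {..<n} \<Longrightarrow> 0 \<le> (t - ds ! i) * (y $ i * y $ i)"
          using yI I_def by (case_tac "i \<in> I") (auto intro!: mult_nonneg_nonneg)
      qed (use a in auto)
      thus ?thesis by (simp add: left_diff_distrib sum_subtractf sum_distrib_left)
    qed
    ultimately show False using px(2) xx xAx by simp
  qed
qed

definition bet :: "'a \<Rightarrow> 'a \<times> 'a \<Rightarrow> real" where
  "bet v e = (if v = snd e then 1 else if v = fst e then -1 else 0)"

definition sig3 :: "'a \<Rightarrow> 'a \<Rightarrow> 'a \<Rightarrow> 'a \<times> 'a \<Rightarrow> real" where
  "sig3 a b c e = (if e = (a,b) \<or> e = (b,c) \<or> e = (c,a) then 1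
      else if e = (b,a) \<or> e = (c,b) \<or> e = (a,c) then -1 else 0)"

definition tri_ord :: "'a set \<Rightarrow> 'a \<times> 'a \<times> 'a" where
  "tri_ord T = (SOME (a,b,c). T = {a,b,c} \<and> a \<noteq> b \<and> b \<noteq> c \<and> a \<noteq> c)"

definition sig :: "'a set \<Rightarrow> 'a \<times> 'a \<Rightarrow> real" where
  "sig T e = (case tri_ord T of (a,b,c) \<Rightarrow> sig3 a b c e)"

lemma tri_ord: assumes "card T = 3"
  obtains a b c where "tri_ord T = (a,b,c)" "T = {a,b,c}" "a \<noteq> b" "b \<noteq> c" "a \<noteq> c"
proof -
  from assms obtain a b c where "T = {a,b,c}" "a \<noteq> b" "b \<noteq> c" "a \<noteq> c" by (auto simp: card_3_iff)
  hence "\<exists>x. (case x of (a,b,c) \<Rightarrow> T = {a,b,c} \<and> a \<noteq> b \<and> b \<noteq> c \<and> a \<noteq> c)" by (intro exI[of _ "(a,b,c)"]) auto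
  hence "case tri_ord T of (a,b,c) \<Rightarrow> T = {a,b,c} \<and> a \<noteq> b \<and> b \<noteq> c \<and> a \<noteq> c"
    unfolding tri_ord_def by (rule someI_ex)
  thus ?thesis using that by (cases "tri_ord T") auto
qed

lemma sig_sq: assumes "card T = 3" "fst e \<noteq> snd e"
  shows "sig T e * sig T e = (if ends e \<subseteq> T then 1 else 0)"
proof -
  obtain a b c where "tri_ord T = (a,b,c)" "T = {a,b,c}" "a \<noteq> b" "b \<noteq> c" "a \<noteq> c" using tri_ord[OF assms(1)] .
  thus ?thesis using assms(2) unfolding sig_def sig3_def ends_def by (cases e) auto
qed

lemma sig_nz: assumes "card T = 3" "sig T e \<noteq> 0"
  shows "ends e \<subseteq> T"
proof -
  obtain a b c where "tri_ord T = (a,b,c)" "T = {a,b,c}" "a \<noteq> b" "b \<noteq> c" "a \<noteq> c" using tri_ord[OF assms(1)] .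
  thus ?thesis using assms(2) unfolding sig_def sig3_def ends_def by (cases e) (auto split: if_splits)
qed

definition Tri :: "'a set \<Rightarrow> ('a \<times> 'a) set \<Rightarrow> 'a set set" where
  "Tri V D = {T. is_triangle V D T}"

context
  fixes V :: "'a set" and D :: "('a \<times> 'a) set"
  assumes G: "oriented_simple_graph V D"
begin

lemma finV: "finite V" using G unfolding oriented_simple_graph_def by simp
lemma DV: "e \<in> D \<Longrightarrow> fst e \<in> V \<and> snd e \<in> V" using G unfolding oriented_simple_graph_def by auto
lemma Dne: "e \<in> D \<Longrightarrow> fst e \<noteq> snd e" using G unfolding oriented_simple_graph_def by (cases e) auto
lemma Dasym: "(u,v) \<in> D \<Longrightarrow> (v,u) \<notin> D" using G unfolding oriented_simple_graph_def by auto


lemma finTri: "finite (Tri V D)"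
proof -
  have "(Tri V D) \<subseteq> Pow V" unfolding Tri_def is_triangle_def is_clique_def by auto
  thus ?thesis using finV by (meson finite_Pow_iff finite_subset)
qed

lemma bet_sum: assumes e: "e \<in> D"
  shows "(\<Sum>v\<in>V. bet v e * g v) = g (snd e) - g (fst e)"
proof -
  have "(\<Sum>v\<in>V. bet v e * g v) = (\<Sum>v\<in>{fst e, snd e}. bet v e * g v)"
    by (rule sum.mono_neutral_right) (use finV DV[OF e] in \<open>auto simp: bet_def\<close>)
  also have "\<dots> = g (snd e) - g (fst e)" using Dne[OF e] by (simp add: bet_def)
  finally show ?thesis .
qed

lemma tri_sum_diag: assumes e: "e \<in> D"
  shows "(\<Sum>T\<in>(Tri V D). sig T e * sig T e) = real (num_tri V D e)"
proof -
  have "(\<Sum>T\<in>(Tri V D). sig T e * sig T e) = (\<Sum>T\<in>(Tri V D). if ends e \<subseteq> T then 1 else 0)"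
    by (rule sum.cong[OF refl], rule sig_sq) (use Dne[OF e] in \<open>auto simp: Tri_def is_triangle_def\<close>)
  also have "\<dots> = real (card {T\<in>(Tri V D). ends e \<subseteq> T})"
    by (simp add: sum.If_cases finTri Int_def)
  also have "{T\<in>(Tri V D). ends e \<subseteq> T} = {T. is_triangle V D T \<and> ends e \<subseteq> T}" unfolding Tri_def by auto
  finally show ?thesis unfolding num_tri_def .
qed

lemma brute_common:
  fixes a b c p q p' q' :: 'a
  assumes "a \<noteq> b" "b \<noteq> c" "a \<noteq> c" "p \<in> {a,b,c}" "q \<in> {a,b,c}" "p' \<in> {a,b,c}" "q' \<in> {a,b,c}"
    "p \<noteq> q" "p' \<noteq> q'" "(p,q) \<noteq> (p',q')" "(p',q') \<noteq> (q,p)"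
  shows "(bet q (p',q') - bet p (p',q')) + sig3 a b c (p,q) * sig3 a b c (p',q') = 0"
  using assms(4-7) apply (simp only: insert_iff empty_iff)
  apply (elim disjE)
  using assms(1-3,8-11) by (simp_all add: bet_def sig3_def)

lemma brute_none:
  fixes p q p' q' :: 'a
  assumes "p \<noteq> q" "p' \<noteq> q'" "(p,q) \<noteq> (p',q')" "(p',q') \<noteq> (q,p)"
  shows "bet q (p',q') - bet p (p',q') =
    (if head_tail (p,q) (p',q') then -1 else if same_end (p,q) (p',q') then 1 else 0)"
  using assms unfolding bet_def head_tail_def same_end_def by auto

lemma entry_id: assumes e: "e \<in> D" and e': "e' \<in> D"
  shows "helm_entry V D e e' = (\<Sum>v\<in>V. bet v e * bet v e') + (\<Sum>T\<in>(Tri V D). sig T e * sig T e')"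
proof -
  obtain p q where pq: "e = (p,q)" by (cases e)
  obtain p' q' where pq': "e' = (p',q')" by (cases e')
  have bs: "(\<Sum>v\<in>V. bet v e * bet v e') = bet q e' - bet p e'" using bet_sum[OF e] pq by simp
  have pnq: "p \<noteq> q" "p' \<noteq> q'" using Dne[OF e] Dne[OF e'] pq pq' by auto
  show ?thesis
  proof (cases "e = e'")
    case True
    have "helm_entry V D e e' = real (num_tri V D e) + 2" using True unfolding helm_entry_def by simp
    moreover have "e' = (p,q)" using True pq by simp
    hence "bet q e' - bet p e' = 2" using pnq by (simp add: bet_def)
    ultimately show ?thesis using bs tri_sum_diag[OF e] True by simp
  next
    case ne: False
    have rev: "(p',q') \<noteq> (q,p)" using Dasym e e' pq pq' by auto
    have ends_ne: "ends e \<noteq> ends e'" using ne rev pq pq' pnq unfolding ends_def by (auto simp: doubleton_eq_iff)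
    show ?thesis
    proof (cases "in_common_tri V D e e'")
      case True
      then obtain T0 where T0: "is_triangle V D T0" "ends e \<subseteq> T0" "ends e' \<subseteq> T0"
        unfolding in_common_tri_def by auto
      have cT0: "card T0 = 3" using T0 unfolding is_triangle_def by simp
      have fin: "finite T0" using cT0 by (metis card.infinite zero_neq_numeral)
      have cu: "card (ends e \<union> ends e') \<ge> 3"
      proof -
        have c2: "card (ends e) = 2" "card (ends e') = 2" using pnq pq pq' by (auto simp: ends_def)
        have "\<not> ends e' \<subseteq> ends e"
        proof
          assume "ends e' \<subseteq> ends e"
          hence "ends e' = ends e" using c2 by (intro card_subset_eq) (auto simp: ends_def)
          thus False using ends_ne by simp
        qed
        hence "ends e \<subset> ends e \<union> ends e'" by blast
        hence "card (ends e) < card (ends e \<union> ends e')" by (intro psubset_card_mono) (auto simp: ends_def)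
        thus ?thesis using pnq pq by (simp add: ends_def)
      qed
      have uniq: "T = T0" if "T \<in> (Tri V D)" "ends e \<subseteq> T" "ends e' \<subseteq> T" for T
      proof -
        have cT: "card T = 3" using that unfolding Tri_def is_triangle_def by simp
        have finT: "finite T" using cT by (metis card.infinite zero_neq_numeral)
        have "ends e \<union> ends e' = T" using cu cT finT that
          by (metis Un_least card_mono card_subset_eq le_antisym)
        moreover have "ends e \<union> ends e' = T0" using cu cT0 fin T0
          by (metis Un_least card_mono card_subset_eq le_antisym)
        ultimately show ?thesis by simp
      qed
      have ts: "(\<Sum>T\<in>(Tri V D). sig T e * sig T e') = sig T0 e * sig T0 e'"
      proof -
        have "(\<Sum>T\<in>(Tri V D). sig T e * sig T e') = (\<Sum>T\<in>{T0}. sig T e * sig T e')"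
        proof (rule sum.mono_neutral_right)
          show "\<forall>T\<in>(Tri V D) - {T0}. sig T e * sig T e' = 0"
          proof
            fix T assume T: "T \<in> (Tri V D) - {T0}"
            have cT: "card T = 3" using T unfolding Tri_def is_triangle_def by simp
            show "sig T e * sig T e' = 0"
            proof (rule ccontr)
              assume "sig T e * sig T e' \<noteq> 0"
              hence "ends e \<subseteq> T" "ends e' \<subseteq> T" using sig_nz[OF cT] by auto
              thus False using uniq T by auto
            qed
          qed
        qed (use finTri T0 in \<open>auto simp: Tri_def\<close>)
        thus ?thesis by simp
      qed
      obtain a b c where abc: "tri_ord T0 = (a,b,c)" "T0 = {a,b,c}" "a \<noteq> b" "b \<noteq> c" "a \<noteq> c"
        using tri_ord[OF cT0] .
      have mem: "p \<in> {a,b,c}" "q \<in> {a,b,c}" "p' \<in> {a,b,c}" "q' \<in> {a,b,c}"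
        using T0(2,3) abc(2) pq pq' unfolding ends_def by auto
      have "(bet q (p',q') - bet p (p',q')) + sig3 a b c (p,q) * sig3 a b c (p',q') = 0"
        by (rule brute_common) (use abc mem pnq ne rev pq pq' in auto)
      moreover have "helm_entry V D e e' = 0" using True ne unfolding helm_entry_def by simp
      ultimately show ?thesis using bs ts abc pq pq' unfolding sig_def by simp
    next
      case False
      have ts: "(\<Sum>T\<in>(Tri V D). sig T e * sig T e') = 0"
      proof (rule sum.neutral, rule ballI, rule ccontr)
        fix T assume T: "T \<in> (Tri V D)" and nz: "sig T e * sig T e' \<noteq> 0"
        have cT: "card T = 3" using T unfolding Tri_def is_triangle_def by simp
        have "ends e \<subseteq> T" "ends e' \<subseteq> T" using nz sig_nz[OF cT] by auto
        thus False using False ne T unfolding in_common_tri_def Tri_def by auto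
      qed
      have "bet q (p',q') - bet p (p',q') =
        (if head_tail (p,q) (p',q') then -1 else if same_end (p,q) (p',q') then 1 else 0)"
        by (rule brute_none) (use pnq ne rev pq pq' in auto)
      thus ?thesis using bs ts False ne pq pq' unfolding helm_entry_def by simp
    qed
  qed
qed

end

lemma quad_gen:
  fixes f :: "'k \<Rightarrow> nat \<Rightarrow> real" and x :: "nat \<Rightarrow> real"
  assumes "finite K"
  shows "(\<Sum>i<m. x i * (\<Sum>j<m. (\<Sum>k\<in>K. f k i * f k j) * x j)) = (\<Sum>k\<in>K. (\<Sum>i<m. f k i * x i)\<^sup>2)"
proof -
  have "(\<Sum>i<m. x i * (\<Sum>j<m. (\<Sum>k\<in>K. f k i * f k j) * x j)) = (\<Sum>i<m. \<Sum>j<m. \<Sum>k\<in>K. (f k i * x i) * (f k j * x j))"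
    by (simp add: sum_distrib_left sum_distrib_right ac_simps)
  also have "\<dots> = (\<Sum>i<m. \<Sum>k\<in>K. \<Sum>j<m. (f k i * x i) * (f k j * x j))"
    by (rule sum.cong[OF refl], rule sum.swap)
  also have "\<dots> = (\<Sum>k\<in>K. \<Sum>i<m. \<Sum>j<m. (f k i * x i) * (f k j * x j))"
    by (rule sum.swap)
  also have "\<dots> = (\<Sum>k\<in>K. (\<Sum>i<m. f k i * x i)\<^sup>2)"
    by (simp add: power2_eq_square sum_product)
  finally show ?thesis .
qed

context
  fixes V :: "'a set" and D :: "('a \<times> 'a) set" and es :: "('a \<times> 'a) list"
  assumes G: "oriented_simple_graph V D" and dis: "distinct es" and ses: "set es = D"
begin

abbreviation "m \<equiv> length es"
abbreviation "H \<equiv> helmholtzian V D es"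

lemma esD: "i < m \<Longrightarrow> es ! i \<in> D" using ses by auto

lemma H_carrier: "H \<in> carrier_mat m m" unfolding helmholtzian_def by simp

lemma H_ent: "i < m \<Longrightarrow> j < m \<Longrightarrow> H $$ (i,j) =
   (\<Sum>v\<in>V. bet v (es!i) * bet v (es!j)) + (\<Sum>T\<in>Tri V D. sig T (es!i) * sig T (es!j))"
  unfolding helmholtzian_def using entry_id[OF G esD esD] by simp

lemma H_sym: "i < m \<Longrightarrow> j < m \<Longrightarrow> H $$ (i,j) = H $$ (j,i)"
  using H_ent by (simp add: mult.commute)

lemma H_quad: assumes x: "x \<in> carrier_vec m"
  shows "x \<bullet> (H *\<^sub>v x) = (\<Sum>v\<in>V. (\<Sum>i<m. bet v (es!i) * x $ i)\<^sup>2) + (\<Sum>T\<in>Tri V D. (\<Sum>i<m. sig T (es!i) * x $ i)\<^sup>2)"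
proof -
  have "x \<bullet> (H *\<^sub>v x) = (\<Sum>i<m. x $ i * (\<Sum>j<m. H $$ (i,j) * x $ j))"
    by (subst sp_comp[OF mult_mat_vec_carrier[OF H_carrier x]], rule sum.cong[OF refl], simp add: mv_comp[OF H_carrier x])
  also have "\<dots> = (\<Sum>i<m. x $ i * (\<Sum>j<m. (\<Sum>v\<in>V. bet v (es!i) * bet v (es!j)) * x $ j))
                  + (\<Sum>i<m. x $ i * (\<Sum>j<m. (\<Sum>T\<in>Tri V D. sig T (es!i) * sig T (es!j)) * x $ j))"
    by (simp add: H_ent distrib_left distrib_right sum.distrib)
  also have "\<dots> = (\<Sum>v\<in>V. (\<Sum>i<m. bet v (es!i) * x $ i)\<^sup>2) + (\<Sum>T\<in>Tri V D. (\<Sum>i<m. sig T (es!i) * x $ i)\<^sup>2)"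
    using quad_gen[OF finV[OF G], where f="\<lambda>v i. bet v (es!i)" and x="\<lambda>i. x $ i" and m="length es"]
      quad_gen[OF finTri[OF G], where f="\<lambda>T i. sig T (es!i)" and x="\<lambda>i. x $ i" and m="length es"] by simp
  finally show ?thesis .
qed

lemma H_quad_ge: assumes x: "x \<in> carrier_vec m" and S: "S \<subseteq> Tri V D"
  shows "x \<bullet> (H *\<^sub>v x) \<ge> (\<Sum>T\<in>S. (\<Sum>i<m. sig T (es!i) * x $ i)\<^sup>2)"
proof -
  have "(\<Sum>T\<in>S. (\<Sum>i<m. sig T (es!i) * x $ i)\<^sup>2) \<le> (\<Sum>T\<in>Tri V D. (\<Sum>i<m. sig T (es!i) * x $ i)\<^sup>2)"
    by (rule sum_mono2[OF finTri[OF G] S]) auto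
  moreover have "0 \<le> (\<Sum>v\<in>V. (\<Sum>i<m. bet v (es!i) * x $ i)\<^sup>2)" by (rule sum_nonneg) auto
  ultimately show ?thesis unfolding H_quad[OF x] by linarith
qed

end

lemma sum_distinct_list: "distinct xs \<Longrightarrow> (\<Sum>x\<in>set xs. g x) = (\<Sum>i<length xs. g (xs ! i))"
  by (simp add: sum.distinct_set_conv_list sum_list_sum_nth atLeast0LessThan)

lemma adj_arc: "adj D u v \<Longrightarrow> \<exists>e\<in>D. ends e = {u,v}"
  unfolding adj_def ends_def by (auto intro: bexI[of _ "(u,v)"] bexI[of _ "(v,u)"] simp: insert_commute)

context
  fixes V :: "'a set" and D :: "('a \<times> 'a) set" and es :: "('a \<times> 'a) list"
  assumes G: "oriented_simple_graph V D" and dis: "distinct es" and ses: "set es = D"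
begin

lemma sum_arcs: "(\<Sum>i<length es. g (es ! i)) = (\<Sum>e\<in>D. g e)"
  using sum_distinct_list[OF dis, of g] ses by simp

lemma tri_arcs: assumes T: "T \<in> Tri V D"
  shows "(\<Sum>i<length es. sig T (es!i) * sig T (es!i)) \<ge> 3"
proof -
  have cT: "card T = 3" and cl: "is_clique V D T" using T unfolding Tri_def is_triangle_def by auto
  obtain a b c where abc: "T = {a,b,c}" "a \<noteq> b" "b \<noteq> c" "a \<noteq> c" using cT by (auto simp: card_3_iff)
  have "adj D a b" "adj D b c" "adj D a c" using cl abc unfolding is_clique_def by auto
  then obtain e1 e2 e3 where e: "e1 \<in> D" "ends e1 = {a,b}" "e2 \<in> D" "ends e2 = {b,c}" "e3 \<in> D" "ends e3 = {a,c}"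
    using adj_arc by meson
  have ne: "e1 \<noteq> e2" "e1 \<noteq> e3" "e2 \<noteq> e3" using e abc by (auto simp: doubleton_eq_iff)
  have "(\<Sum>i<length es. sig T (es!i) * sig T (es!i)) = (\<Sum>e\<in>D. sig T e * sig T e)" by (rule sum_arcs)
  also have "\<dots> = (\<Sum>e\<in>D. if ends e \<subseteq> T then 1 else 0)"
    by (rule sum.cong[OF refl], rule sig_sq[OF cT], rule Dne[OF G])
  also have "\<dots> = real (card {e\<in>D. ends e \<subseteq> T})"
    using finite_set[of es] ses by (simp add: sum.If_cases Int_def)
  finally have eq: "(\<Sum>i<length es. sig T (es!i) * sig T (es!i)) = real (card {e\<in>D. ends e \<subseteq> T})" .
  have finD: "finite D" using ses by auto
  have "card {e1,e2,e3} \<le> card {e\<in>D. ends e \<subseteq> T}"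
    by (rule card_mono) (use finD e abc in auto)
  moreover have "card {e1,e2,e3} = 3" using ne by simp
  ultimately show ?thesis unfolding eq by simp
qed

lemma main_count:
  assumes S: "S \<subseteq> Tri V D" and fS: "finite S"
  and disj: "\<And>T T'. T \<in> S \<Longrightarrow> T' \<in> S \<Longrightarrow> T \<noteq> T' \<Longrightarrow> card (T \<inter> T') \<le> 1"
  shows "card S \<le> num_eigs_ge (helmholtzian V D es) 3"
proof -
  obtain Ts where dTs: "distinct Ts" and sTs: "set Ts = S" using finite_distinct_list[OF fS] by blast
  define k where "k = length Ts"
  have ck: "card S = k" unfolding k_def using distinct_card[OF dTs] sTs by simp
  have TsS: "Ts ! j \<in> S" if "j < k" for j using that sTs unfolding k_def by auto
  have cT: "card T = 3" if "T \<in> S" for T using that S unfolding Tri_def is_triangle_def by auto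
  have orth_e: "sig (Ts!l) e * sig (Ts!j) e = 0" if jl: "j < k" "l < k" "j \<noteq> l" and e: "e \<in> D" for j l e
  proof (rule ccontr)
    assume "sig (Ts!l) e * sig (Ts!j) e \<noteq> 0"
    hence "ends e \<subseteq> Ts!l" "ends e \<subseteq> Ts!j"
      using sig_nz[OF cT[OF TsS[OF jl(2)]]] sig_nz[OF cT[OF TsS[OF jl(1)]]] by auto
    hence sub: "ends e \<subseteq> Ts!l \<inter> Ts!j" by auto
    have fin: "finite (Ts!l \<inter> Ts!j)" using cT[OF TsS[OF jl(2)]] by (metis card.infinite finite_Int zero_neq_numeral)
    have "card (ends e) = 2" using Dne[OF G e] by (cases e) (auto simp: ends_def)
    moreover have "card (ends e) \<le> card (Ts!l \<inter> Ts!j)" by (rule card_mono[OF fin sub])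
    moreover have "Ts!l \<noteq> Ts!j" using dTs jl unfolding k_def by (simp add: nth_eq_iff_index_eq)
    hence "card (Ts!l \<inter> Ts!j) \<le> 1" using disj TsS jl by auto
    ultimately show False by simp
  qed
  define N where "N = (\<lambda>l. \<Sum>i<length es. sig (Ts!l) (es!i) * sig (Ts!l) (es!i))"
  have N3: "N l \<ge> 3" if "l < k" for l unfolding N_def by (rule tri_arcs) (use TsS[OF that] S in auto)
  define Bm where "Bm = mat (length es) k (\<lambda>(i,j). sig (Ts!j) (es!i))"
  have Bm: "Bm \<in> carrier_mat (length es) k" unfolding Bm_def by simp
  show ?thesis unfolding ck
  proof (rule count_eigs[OF H_carrier[OF G dis ses] H_sym[OF G dis ses] Bm])
    fix c :: "real vec" assume c: "c \<in> carrier_vec k" "c \<noteq> 0\<^sub>v k"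
    define x where "x = Bm *\<^sub>v c"
    have x: "x \<in> carrier_vec (length es)" unfolding x_def using Bm c by simp
    have xi: "x $ i = (\<Sum>j<k. sig (Ts!j) (es!i) * c $ j)" if "i < length es" for i
      unfolding x_def using mv_comp[OF Bm c(1) that] that by (simp add: Bm_def)
    have P: "(\<Sum>i<length es. sig (Ts!l) (es!i) * x $ i) = N l * c $ l" if l: "l < k" for l
    proof -
      have "(\<Sum>i<length es. sig (Ts!l) (es!i) * x $ i) = (\<Sum>i<length es. \<Sum>j<k. c $ j * (sig (Ts!l) (es!i) * sig (Ts!j) (es!i)))"
        by (rule sum.cong[OF refl]) (simp add: xi sum_distrib_left ac_simps)
      also have "\<dots> = (\<Sum>j<k. c $ j * (\<Sum>i<length es. sig (Ts!l) (es!i) * sig (Ts!j) (es!i)))"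
        by (subst sum.swap) (simp add: sum_distrib_left)
      also have "\<dots> = (\<Sum>j<k. if j = l then c $ l * N l else 0)"
      proof (rule sum.cong[OF refl])
        fix j assume j: "j \<in> {..<k}"
        show "c $ j * (\<Sum>i<length es. sig (Ts!l) (es!i) * sig (Ts!j) (es!i)) = (if j = l then c $ l * N l else 0)"
        proof (cases "j = l")
          case False
          have "(\<Sum>i<length es. sig (Ts!l) (es!i) * sig (Ts!j) (es!i)) = 0"
            by (rule sum.neutral) (use orth_e[of j l] j l False esD[OF G dis ses] in auto)
          thus ?thesis using False by simp
        qed (simp add: N_def)
      qed
      also have "\<dots> = N l * c $ l" using l by simp
      finally show ?thesis .
    qed
    have xx: "x \<bullet> x = (\<Sum>l<k. N l * (c $ l * c $ l))"
    proof -
      have "x \<bullet> x = (\<Sum>i<length es. x $ i * x $ i)" by (rule sp_comp[OF x])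
      also have "\<dots> = (\<Sum>i<length es. \<Sum>j<k. c $ j * (sig (Ts!j) (es!i) * x $ i))"
      proof (rule sum.cong[OF refl])
        fix i assume i: "i \<in> {..<length es}"
        have "x $ i * x $ i = x $ i * (\<Sum>j<k. sig (Ts!j) (es!i) * c $ j)" using xi i by simp
        also have "\<dots> = (\<Sum>j<k. c $ j * (sig (Ts!j) (es!i) * x $ i))" by (simp add: sum_distrib_left ac_simps)
        finally show "x $ i * x $ i = (\<Sum>j<k. c $ j * (sig (Ts!j) (es!i) * x $ i))" .
      qed
      also have "\<dots> = (\<Sum>j<k. c $ j * (\<Sum>i<length es. sig (Ts!j) (es!i) * x $ i))"
        by (subst sum.swap) (simp add: sum_distrib_left)
      also have "\<dots> = (\<Sum>l<k. N l * (c $ l * c $ l))" by (rule sum.cong[OF refl]) (simp add: P)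
      finally show ?thesis .
    qed
    have h1: "x \<bullet> (helmholtzian V D es *\<^sub>v x) \<ge> (\<Sum>T\<in>S. (\<Sum>i<length es. sig T (es!i) * x $ i)\<^sup>2)"
      by (rule H_quad_ge[OF G dis ses x S])
    have h2: "(\<Sum>T\<in>S. (\<Sum>i<length es. sig T (es!i) * x $ i)\<^sup>2) = (\<Sum>l<k. (N l * c $ l)\<^sup>2)"
      unfolding sTs[symmetric] sum_distinct_list[OF dTs] k_def[symmetric]
      by (rule sum.cong[OF refl]) (simp add: P)
    have h3: "(\<Sum>l<k. (N l * c $ l)\<^sup>2) \<ge> 3 * (x \<bullet> x)"
      unfolding xx sum_distrib_left
    proof (rule sum_mono)
      fix l assume l: "l \<in> {..<k}"
      have "N l * N l \<ge> 3 * N l" using N3[of l] l by (simp add: mult_right_mono)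
      hence "(N l * N l) * (c $ l * c $ l) \<ge> (3 * N l) * (c $ l * c $ l)"
        by (rule mult_right_mono) simp
      thus "3 * (N l * (c $ l * c $ l)) \<le> (N l * c $ l)\<^sup>2" by (simp add: power2_eq_square ac_simps)
    qed
    have q: "3 * (x \<bullet> x) \<le> x \<bullet> (helmholtzian V D es *\<^sub>v x)" using h1 h2 h3 by linarith
    obtain a where a: "a < k" "c $ a \<noteq> 0" using c by (metis carrier_vecD eq_vecI index_zero_vec(1) index_zero_vec(2))
    have "x \<bullet> x \<ge> N a * (c $ a * c $ a)" unfolding xx
    proof (rule member_le_sum)
      fix l assume l: "l \<in> {..<k} - {a}"
      have "0 \<le> N l" using N3[of l] l by simp
      thus "0 \<le> N l * (c $ l * c $ l)" by simp
    qed (use a in auto)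
    moreover have "N a * (c $ a * c $ a) > 0"
    proof -
      have "c $ a * c $ a > 0" using a(2) by (metis not_real_square_gt_zero)
      moreover have "N a > 0" using N3[OF a(1)] by simp
      ultimately show ?thesis by simp
    qed
    ultimately have "x \<noteq> 0\<^sub>v (length es)" by auto
    thus "Bm *\<^sub>v c \<noteq> 0\<^sub>v (length es) \<and> 3 * ((Bm *\<^sub>v c) \<bullet> (Bm *\<^sub>v c)) \<le> (Bm *\<^sub>v c) \<bullet> (helmholtzian V D es *\<^sub>v (Bm *\<^sub>v c))"
      using q unfolding x_def by simp
  qed
qed

end

lemma nbhd_card:
  fixes C T :: "'a set"
  assumes finC: "finite C" and T: "T \<subseteq> C" "card T = 3"
  shows "card {T'. (T' \<subseteq> C \<and> card T' = 3) \<and> 2 \<le> card (T \<inter> T')} \<le> 1 + 3 * (card C - 3)"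
proof -
  define P2 where "P2 = {p. p \<subseteq> T \<and> card p = 2}"
  have finT: "finite T" using finC T finite_subset by blast
  have cP2: "card P2 = 3" unfolding P2_def using n_subsets[OF finT, of 2] T by (simp add: choose_two)
  have finP2: "finite P2" unfolding P2_def using finT by simp
  define X where "X = (\<Union>p\<in>P2. (\<lambda>z. insert z p) ` (C - T))"
  have sub: "{T'. (T' \<subseteq> C \<and> card T' = 3) \<and> 2 \<le> card (T \<inter> T')} \<subseteq> insert T X"
  proof
    fix T' assume "T' \<in> {T'. (T' \<subseteq> C \<and> card T' = 3) \<and> 2 \<le> card (T \<inter> T')}"
    hence T': "T' \<subseteq> C" "card T' = 3" "2 \<le> card (T \<inter> T')" by auto
    have finT': "finite T'" using finC T' finite_subset by blast
    show "T' \<in> insert T X"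
    proof (cases "T' = T")
      case False
      define p where "p = T \<inter> T'"
      have pT: "p \<subseteq> T" "p \<subseteq> T'" unfolding p_def by auto
      have "card p \<le> 3" using card_mono[OF finT pT(1)] T by simp
      moreover have "card p \<noteq> 3"
      proof
        assume "card p = 3"
        hence "p = T" "p = T'" using card_subset_eq[OF finT pT(1)] card_subset_eq[OF finT' pT(2)] T T' by auto
        thus False using False by simp
      qed
      ultimately have cp: "card p = 2" using T' unfolding p_def by linarith
      have "card (T' - p) = 1" using card_Diff_subset[OF _ pT(2)] cp T' finite_subset[OF pT(2) finT'] by simp
      then obtain z where z: "T' - p = {z}" by (auto simp: card_Suc_eq)
      have zC: "z \<in> C - T" using z T' unfolding p_def by auto
      have "T' = insert z p" using z pT by auto
      moreover have "p \<in> P2" unfolding P2_def using pT cp by simp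
      ultimately show ?thesis unfolding X_def using zC by blast
    qed simp
  qed
  have finX: "finite X" unfolding X_def using finP2 finC by simp
  have "card X \<le> (\<Sum>p\<in>P2. card ((\<lambda>z. insert z p) ` (C - T)))" unfolding X_def by (rule card_UN_le[OF finP2])
  also have "\<dots> \<le> (\<Sum>p\<in>P2. card (C - T))" by (rule sum_mono) (rule card_image_le, use finC in simp)
  also have "\<dots> = 3 * (card C - 3)" using cP2 card_Diff_subset[OF finT T(1)] T by simp
  finally have cX: "card X \<le> 3 * (card C - 3)" .
  have "card {T'. (T' \<subseteq> C \<and> card T' = 3) \<and> 2 \<le> card (T \<inter> T')} \<le> card (insert T X)"
    by (rule card_mono[OF _ sub]) (use finX in simp)
  also have "\<dots> \<le> Suc (card X)" by (rule card_insert_le_m1) simp_all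
  finally show ?thesis using cX by simp
qed

theorem corollary5p9:
  fixes V :: "'a set" and D :: "('a \<times> 'a) set" and es :: "('a \<times> 'a) list"
  assumes "oriented_simple_graph V D"
    and "D \<noteq> {}"
    and "distinct es" and "set es = D"
  shows "real (num_eigs_ge (helmholtzian V D es) 3) \<ge>
           real (clique_number V D choose 3) / (1 + 3 * (real (clique_number V D) - 3))"
proof -
  note G = assms(1) and dis = assms(3) and ses = assms(4)
  define w where "w = clique_number V D"
  define Cl where "Cl = {C. is_clique V D C}"
  have finCl: "finite Cl"
  proof -
    have "Cl \<subseteq> Pow V" unfolding Cl_def is_clique_def by auto
    thus ?thesis using finV[OF G] by (meson finite_Pow_iff finite_subset)
  qed
  have "{} \<in> Cl" unfolding Cl_def is_clique_def by simp
  hence "w \<in> card ` Cl" unfolding w_def clique_number_def Cl_def[symmetric]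
    using finCl by (intro Max_in) auto
  then obtain C where C: "is_clique V D C" and cC: "card C = w" unfolding Cl_def by auto
  have finC: "finite C" using C finV[OF G] unfolding is_clique_def using finite_subset by blast
  show ?thesis
  proof (cases "w < 3")
    case True
    hence z: "real (w choose 3) = 0" by simp
    show ?thesis unfolding w_def[symmetric] z by simp
  next
    case False
    hence w3: "w \<ge> 3" by simp
    define Tr3 where "Tr3 = {T. T \<subseteq> C \<and> card T = 3}"
    have cTr3: "card Tr3 = w choose 3" unfolding Tr3_def using n_subsets[OF finC, of 3] cC by simp
    have finTr3: "finite Tr3" unfolding Tr3_def using finC by simp
    define Fam where "Fam = {F. F \<subseteq> Tr3 \<and> (\<forall>T\<in>F. \<forall>T'\<in>F. T \<noteq> T' \<longrightarrow> card (T \<inter> T') \<le> 1)}"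
    have finFam: "finite Fam" unfolding Fam_def using finTr3 by simp
    have "{} \<in> Fam" unfolding Fam_def by simp
    hence "Max (card ` Fam) \<in> card ` Fam" using finFam by (intro Max_in) auto
    then obtain S where S: "S \<in> Fam" and Smax: "card S = Max (card ` Fam)" by auto
    have Sge: "card F \<le> card S" if "F \<in> Fam" for F using that finFam Smax by simp
    have finS: "finite S" using S finTr3 unfolding Fam_def using finite_subset by blast
    define N where "N = (\<lambda>T. {T'. (T' \<subseteq> C \<and> card T' = 3) \<and> 2 \<le> card (T \<inter> T')})"
    have cover: "Tr3 \<subseteq> (\<Union>T\<in>S. N T)"
    proof
      fix T0 assume T0: "T0 \<in> Tr3"
      show "T0 \<in> (\<Union>T\<in>S. N T)"
      proof (rule ccontr)
        assume nc: "T0 \<notin> (\<Union>T\<in>S. N T)"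
        hence small: "card (T \<inter> T0) \<le> 1" if "T \<in> S" for T using that T0 unfolding N_def Tr3_def by fastforce
        have "T0 \<notin> S"
        proof
          assume "T0 \<in> S"
          hence "card (T0 \<inter> T0) \<le> 1" by (rule small)
          thus False using T0 unfolding Tr3_def by simp
        qed
        have "insert T0 S \<in> Fam" using S T0 small unfolding Fam_def by (auto simp: Int_commute)
        hence "card (insert T0 S) \<le> card S" by (rule Sge)
        thus False using \<open>T0 \<notin> S\<close> finS by simp
      qed
    qed
    have "w choose 3 \<le> card (\<Union>T\<in>S. N T)"
      unfolding cTr3[symmetric] by (rule card_mono) (use finS finC cover in \<open>auto simp: N_def\<close>)
    also have "\<dots> \<le> (\<Sum>T\<in>S. card (N T))" by (rule card_UN_le[OF finS])
    also have "\<dots> \<le> (\<Sum>T\<in>S. 1 + 3 * (w - 3))"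
    proof (rule sum_mono)
      fix T assume "T \<in> S"
      hence "T \<subseteq> C" "card T = 3" using S unfolding Fam_def Tr3_def by auto
      from nbhd_card[OF finC this] show "card (N T) \<le> 1 + 3 * (w - 3)" unfolding N_def cC .
    qed
    also have "\<dots> = card S * (1 + 3 * (w - 3))" by simp
    finally have ineq: "w choose 3 \<le> card S * (1 + 3 * (w - 3))" .
    have STri: "S \<subseteq> Tri V D"
    proof
      fix T assume "T \<in> S"
      hence "T \<subseteq> C" "card T = 3" using S unfolding Fam_def Tr3_def by auto
      thus "T \<in> Tri V D" using C unfolding Tri_def is_triangle_def is_clique_def by auto
    qed
    have "card S \<le> num_eigs_ge (helmholtzian V D es) 3"
      by (rule main_count[OF G dis ses STri finS]) (use S in \<open>auto simp: Fam_def\<close>)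
    moreover have "real (w choose 3) / (1 + 3 * (real w - 3)) \<le> real (card S)"
    proof -
      have d: "1 + 3 * (real w - 3) = real (1 + 3 * (w - 3))" using w3 by (simp add: of_nat_diff)
      have "real (w choose 3) \<le> real (card S) * real (1 + 3 * (w - 3))"
        using ineq by (metis of_nat_le_iff of_nat_mult)
      thus ?thesis unfolding d by (simp add: pos_divide_le_eq)
    qed
    ultimately show ?thesis unfolding w_def by simp
  qed
qed

end
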